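(* Let $r$ be a positive integer and let $p\in Hom_+(n,n)$ be H-stable and $r$-regular, i.e. $p(e+te_i)=\left(\frac{r+t}{r}\right)^r$ for all real $t$ and all $1\le i\le n$. For $1\le j\le n$ let $q_{(j)}\in Hom_+(n-1,n-1)$ be the polynomial in the variables $(x_k:k\ne j)$ given by $q_{(j)}=\frac{\partial}{\partial x_j}p(x_1,\dots,x_n)\big|_{x_j=0}$. Then for every $1\le j\le n$ the polynomial $G(r)^{-1}q_{(j)}$ is doubly-stochastic.
   Context: $Hom_+(m,d)$ is the set of homogeneous polynomials of degree $d$ in $m$ variables with non-negative real coefficients. $p\in Hom_+(n,n)$ is H-stable if $p(z_1,\dots,z_n)\ne 0$ whenever $\mathrm{Re}(z_i)>0$ for all $i$. $e=(1,\dots,1)$ and $e_i$ is the $i$-th standard basis vector. A polynomial $q\in Hom_+(m,m)$ is doubly-stochastic if $\frac{\partial q}{\partial x_k}(1,\dots,1)=1$ for all $k$ (equivalently, $q(e)=1$ and $Cap(q)\ge 1$, where $Cap(q)=\inf_{x_i>0}\frac{q(x_1,\dots,x_m)}{\prod_i x_i}$). $G(x)=\left(\frac{x-1}{x}\right)^{x-1}$ for $x\ge1$. *)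

theory Defs
  imports Complex_Main
begin

text \<open>Multivariate polynomials are represented by their coefficient function on
monomials. A monomial is an exponent vector alpha :: nat => nat; a polynomial in the
variables x_i (i in a finite index set V) that is homogeneous of degree d has all its
coefficients supported on the monomials in monoms V d.\<close>

definition monoms :: "nat set \<Rightarrow> nat \<Rightarrow> (nat \<Rightarrow> nat) set" where
  "monoms V d = {\<alpha>. (\<forall>i. i \<notin> V \<longrightarrow> \<alpha> i = 0) \<and> sum \<alpha> V = d}"

definition hom_plus :: "nat set \<Rightarrow> nat \<Rightarrow> ((nat \<Rightarrow> nat) \<Rightarrow> real) \<Rightarrow> bool" where
  "hom_plus V d c \<longleftrightarrow> (\<forall>\<alpha>. 0 \<le> c \<alpha>) \<and> (\<forall>\<alpha>. \<alpha> \<notin> monoms V d \<longrightarrow> c \<alpha> = 0)"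

definition peval :: "nat set \<Rightarrow> nat \<Rightarrow> ((nat \<Rightarrow> nat) \<Rightarrow> real) \<Rightarrow> (nat \<Rightarrow> 'a::{real_algebra_1,comm_ring_1}) \<Rightarrow> 'a" where
  "peval V d c z = (\<Sum>\<alpha>\<in>monoms V d. of_real (c \<alpha>) * (\<Prod>i\<in>V. z i ^ \<alpha> i))"

text \<open>Partial derivative with respect to x_k (coefficientwise); it lowers the degree by one.\<close>
definition pdiff :: "nat \<Rightarrow> ((nat \<Rightarrow> nat) \<Rightarrow> real) \<Rightarrow> ((nat \<Rightarrow> nat) \<Rightarrow> real)" where
  "pdiff k c = (\<lambda>\<alpha>. real (\<alpha> k + 1) * c (\<alpha>(k := \<alpha> k + 1)))"

definition subst_zero :: "nat \<Rightarrow> ((nat \<Rightarrow> nat) \<Rightarrow> real) \<Rightarrow> ((nat \<Rightarrow> nat) \<Rightarrow> real)" where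
  "subst_zero k c = (\<lambda>\<alpha>. if \<alpha> k = 0 then c \<alpha> else 0)"

text \<open>H-stability of p in Hom_+(n,n), variables x_0, ..., x_(n-1).\<close>
definition H_stable :: "nat \<Rightarrow> ((nat \<Rightarrow> nat) \<Rightarrow> real) \<Rightarrow> bool" where
  "H_stable n p \<longleftrightarrow> (\<forall>z :: nat \<Rightarrow> complex. (\<forall>i<n. 0 < Re (z i)) \<longrightarrow> peval {..<n} n p z \<noteq> 0)"

definition doubly_stochastic :: "nat set \<Rightarrow> ((nat \<Rightarrow> nat) \<Rightarrow> real) \<Rightarrow> bool" where
  "doubly_stochastic V q \<longleftrightarrow> hom_plus V (card V) q \<and>
     (\<forall>k\<in>V. peval V (card V - 1) (pdiff k q) (\<lambda>_. 1 :: real) = 1)"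

text \<open>G(x) = ((x-1)/x)^(x-1) for x >= 1, with the convention 0^0 = 1 at x = 1.\<close>
definition G :: "real \<Rightarrow> real" where
  "G x = (if x = 1 then 1 else ((x - 1) / x) powr (x - 1))"

end

theory Submission
  imports Defs "HOL-Analysis.Analysis" "HOL-Computational_Algebra.Fundamental_Theorem_Algebra"
begin


lemma finite_monoms: assumes "finite V" shows "finite (monoms V d)"
proof -
  have "inj_on (\<lambda>\<alpha>. restrict \<alpha> V) (monoms V d)"
  proof (rule inj_onI)
    fix \<alpha> \<beta> assume a: "\<alpha> \<in> monoms V d" "\<beta> \<in> monoms V d" "restrict \<alpha> V = restrict \<beta> V"
    show "\<alpha> = \<beta>"
    proof
      fix i show "\<alpha> i = \<beta> i" using a unfolding monoms_def
        by (cases "i \<in> V") (auto dest: fun_cong[of _ _ i])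
    qed
  qed
  moreover have "(\<lambda>\<alpha>. restrict \<alpha> V) ` monoms V d \<subseteq> (\<Pi>\<^sub>E i \<in> V. {0..d})"
  proof
    fix f assume "f \<in> (\<lambda>\<alpha>. restrict \<alpha> V) ` monoms V d"
    then obtain \<alpha> where f: "f = restrict \<alpha> V" and a: "\<alpha> \<in> monoms V d" by auto
    have "\<alpha> i \<le> d" if "i \<in> V" for i
      using a that assms member_le_sum[of i V \<alpha>] unfolding monoms_def by auto
    then show "f \<in> (\<Pi>\<^sub>E i \<in> V. {0..d})" using f by auto
  qed
  moreover have "finite (\<Pi>\<^sub>E i \<in> V. {0..d})" using assms by (intro finite_PiE) auto
  ultimately show ?thesis by (meson finite_imageD finite_subset)
qed

definition Pg :: "nat set \<Rightarrow> nat \<Rightarrow> ((nat \<Rightarrow> nat) \<Rightarrow> real) \<Rightarrow> nat \<Rightarrow> (nat \<Rightarrow> 'a::{real_algebra_1,comm_ring_1}) \<Rightarrow> 'a poly" where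
  "Pg V d c j y = (\<Sum>\<alpha>\<in>monoms V d. monom (of_real (c \<alpha>) * (\<Prod>i\<in>V-{j}. y i ^ \<alpha> i)) (\<alpha> j))"

lemma poly_Pg: assumes "finite V" "j \<in> V"
  shows "poly (Pg V d c j y) s = peval V d c (y(j:=s))"
proof -
  have "(\<Prod>i\<in>V. (y(j:=s)) i ^ \<alpha> i) = s ^ \<alpha> j * (\<Prod>i\<in>V-{j}. y i ^ \<alpha> i)" for \<alpha>
    using assms by (simp add: prod.remove[of V j])
  then show ?thesis unfolding Pg_def peval_def
    by (simp add: poly_sum poly_monom mult_ac)
qed

lemma coeff_Pg: "coeff (Pg V d c j y) m = (\<Sum>\<alpha>\<in>monoms V d. if \<alpha> j = m then of_real (c \<alpha>) * (\<Prod>i\<in>V-{j}. y i ^ \<alpha> i) else 0)"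
  unfolding Pg_def by (simp add: coeff_sum)

lemma map_Pg: "map_poly complex_of_real (Pg V d c j y) = Pg V d c j (\<lambda>i. complex_of_real (y i))"
  by (rule poly_eqI) (simp add: coeff_map_poly coeff_Pg of_real_sum if_distrib cong: if_cong)

lemma peval_scale: "peval V d c (\<lambda>i. l * z i) = l ^ d * peval V d c z"
proof -
  have "(\<Prod>i\<in>V. (l * z i) ^ \<alpha> i) = l ^ d * (\<Prod>i\<in>V. z i ^ \<alpha> i)" if "\<alpha> \<in> monoms V d" for \<alpha>
  proof -
    have "(\<Prod>i\<in>V. (l * z i) ^ \<alpha> i) = (\<Prod>i\<in>V. l ^ \<alpha> i) * (\<Prod>i\<in>V. z i ^ \<alpha> i)"
      by (simp add: power_mult_distrib prod.distrib)
    also have "(\<Prod>i\<in>V. l ^ \<alpha> i) = l ^ d" using that by (simp add: monoms_def power_sum[symmetric])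
    finally show ?thesis .
  qed
  then show ?thesis unfolding peval_def by (simp add: sum_distrib_left mult_ac)
qed

lemma stable_roots:
  assumes H: "H_stable n p" and j: "j < n" and y: "\<forall>i<n. i \<noteq> j \<longrightarrow> y i > 0"
    and z: "peval {..<n} n p ((\<lambda>i. complex_of_real (y i))(j:=z)) = 0"
  shows "z \<in> \<real> \<and> Re z \<le> 0"
proof (rule ccontr)
  assume nz: "\<not> (z \<in> \<real> \<and> Re z \<le> 0)"
  define w where "w = csqrt z"
  have w2: "w^2 = z" by (simp add: w_def)
  have Rew: "Re w > 0"
  proof (rule ccontr)
    assume "\<not> Re w > 0"
    then have "Re w = 0" using csqrt_principal[of z] by (auto simp: w_def)
    then have "w = \<i> * of_real (Im w)" by (simp add: complex_eq_iff)
    then have "z = (\<i> * of_real (Im w))^2" using w2 by simp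
    also have "\<dots> = - of_real ((Im w)^2)" by (simp add: power_mult_distrib)
    finally have "z = - of_real ((Im w)^2)" .
    then have "z = of_real (-((Im w)^2))" by simp
    then show False using nz by (metis Re_complex_of_real Reals_of_real neg_le_0_iff_le zero_le_power2)
  qed
  then have wnz: "w \<noteq> 0" by auto
  define l where "l = 1 / w"
  have Rel: "Re l > 0" using Rew wnz by (simp add: l_def Re_divide divide_pos_pos complex_neq_0 power2_eq_square)
  define z' where "z' = (\<lambda>i. l * ((\<lambda>i. complex_of_real (y i))(j:=z)) i)"
  have "peval {..<n} n p z' = 0" unfolding z'_def by (simp only: peval_scale z mult_zero_right)
  moreover have "\<forall>i<n. 0 < Re (z' i)"
  proof (intro allI impI)
    fix i assume i: "i < n"
    show "0 < Re (z' i)"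
    proof (cases "i = j")
      case True
      have "l * z = w" using w2 wnz by (auto simp: l_def power2_eq_square)
      then show ?thesis using True Rew by (simp add: z'_def)
    next
      case False
      then show ?thesis using y i Rel by (simp add: z'_def)
    qed
  qed
  ultimately show False using H unfolding H_stable_def by blast
qed

lemma cap:
  assumes hp: "hom_plus {..<n} n p" and s1: "(\<Sum>\<alpha>\<in>monoms {..<n} n. p \<alpha>) = 1"
    and s2: "\<forall>i<n. (\<Sum>\<alpha>\<in>monoms {..<n} n. p \<alpha> * \<alpha> i) = 1"
    and x: "\<forall>i<n. x i > (0::real)"
  shows "peval {..<n} n p x \<ge> (\<Prod>i<n. x i)"
proof -
  define M where "M = monoms {..<n} n"
  have fM: "finite M" by (simp add: M_def finite_monoms)
  have Mne: "M \<noteq> {}" using s1 by (auto simp: M_def)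
  define Y where "Y = (\<lambda>\<alpha>. \<Sum>i<n. real (\<alpha> i) * ln (x i))"
  have "exp (\<Sum>\<alpha>\<in>M. p \<alpha> *\<^sub>R Y \<alpha>) \<le> (\<Sum>\<alpha>\<in>M. p \<alpha> * exp (Y \<alpha>))"
    by (rule convex_on_sum[OF fM Mne exp_convex]) (use s1 hp in \<open>auto simp: M_def hom_plus_def\<close>)
  moreover have "(\<Sum>\<alpha>\<in>M. p \<alpha> *\<^sub>R Y \<alpha>) = (\<Sum>i<n. ln (x i))"
  proof -
    have "(\<Sum>\<alpha>\<in>M. p \<alpha> *\<^sub>R Y \<alpha>) = (\<Sum>i<n. (\<Sum>\<alpha>\<in>M. p \<alpha> * \<alpha> i) * ln (x i))"
      by (simp add: Y_def sum_distrib_left sum_distrib_right mult_ac sum.swap[of _ M])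
    also have "\<dots> = (\<Sum>i<n. ln (x i))" using s2 by (simp add: M_def)
    finally show ?thesis .
  qed
  moreover have "exp (Y \<alpha>) = (\<Prod>i<n. x i ^ \<alpha> i)" for \<alpha>
  proof -
    have "exp (Y \<alpha>) = (\<Prod>i<n. exp (real (\<alpha> i) * ln (x i)))" by (simp add: Y_def exp_sum)
    also have "\<dots> = (\<Prod>i<n. x i ^ \<alpha> i)"
    proof (rule prod.cong)
      fix i assume "i \<in> {..<n}"
      then have xi: "x i > 0" using x by simp
      then have "real (\<alpha> i) * ln (x i) = ln (x i ^ \<alpha> i)" by (simp add: ln_realpow)
      then show "exp (real (\<alpha> i) * ln (x i)) = x i ^ \<alpha> i" using xi by simp
    qed simp
    finally show ?thesis .
  qed
  moreover have "exp (\<Sum>i<n. ln (x i)) = (\<Prod>i<n. x i)" using x by (simp add: exp_sum)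
  ultimately show ?thesis by (simp add: peval_def M_def)
qed

lemma sum_upd0: assumes "finite V" "k \<in> V"
  shows "sum (f(k:=v)) V = sum f V - f k + (v::nat) \<and> f k \<le> sum f V"
proof -
  have "sum (f(k:=v)) V = v + sum (f(k:=v)) (V-{k})" using assms by (simp add: sum.remove)
  also have "sum (f(k:=v)) (V-{k}) = sum f (V-{k})" by (rule sum.cong) auto
  moreover have "sum f V = f k + sum f (V-{k})" using assms by (simp add: sum.remove)
  ultimately show ?thesis by auto
qed
lemmas sum_upd = sum_upd0[THEN conjunct1] sum_upd0[THEN conjunct2]

lemma pdiff_ones: assumes V: "finite V" "k \<in> V" and d: "d \<ge> 1"
  shows "peval V (d-1) (pdiff k c) (\<lambda>_. 1::real) = (\<Sum>\<beta>\<in>monoms V d. c \<beta> * \<beta> k)"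
proof -
  have "peval V (d-1) (pdiff k c) (\<lambda>_. 1::real) = (\<Sum>\<gamma>\<in>monoms V (d-1). real (\<gamma> k + 1) * c (\<gamma>(k:=\<gamma> k+1)))"
    by (simp add: peval_def pdiff_def)
  also have "\<dots> = (\<Sum>\<beta>\<in>{\<beta>\<in>monoms V d. \<beta> k \<ge> 1}. c \<beta> * \<beta> k)"
  proof (rule sum.reindex_bij_witness[where i = "\<lambda>\<beta>. \<beta>(k:=\<beta> k - 1)" and j = "\<lambda>\<gamma>. \<gamma>(k:=\<gamma> k+1)"])
    fix \<gamma> assume g: "\<gamma> \<in> monoms V (d-1)"
    show "\<gamma>(k := \<gamma> k + 1, k := (\<gamma>(k := \<gamma> k + 1)) k - 1) = \<gamma>" by simp
    show "\<gamma>(k := \<gamma> k + 1) \<in> {\<beta> \<in> monoms V d. 1 \<le> \<beta> k}"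
      using g V d sum_upd0[OF V, where f=\<gamma> and v="\<gamma> k + 1"] by (auto simp: monoms_def)
    show "c (\<gamma>(k := \<gamma> k + 1)) * real ((\<gamma>(k := \<gamma> k + 1)) k) = real (\<gamma> k + 1) * c (\<gamma>(k := \<gamma> k + 1))"
      by simp
  next
    fix \<beta> assume b: "\<beta> \<in> {\<beta> \<in> monoms V d. 1 \<le> \<beta> k}"
    show "\<beta>(k := \<beta> k - 1, k := (\<beta>(k := \<beta> k - 1)) k + 1) = \<beta>" using b by auto
    show "\<beta>(k := \<beta> k - 1) \<in> monoms V (d - 1)"
      using b V sum_upd0[OF V, where f=\<beta> and v="\<beta> k - 1"] by (auto simp: monoms_def)
  qed
  also have "\<dots> = (\<Sum>\<beta>\<in>monoms V d. c \<beta> * \<beta> k)"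
    by (rule sum.mono_neutral_left) (auto simp: finite_monoms V)
  finally show ?thesis .
qed

lemma of_real_real [simp]: "of_real x = (x::real)" by simp

lemma Q_coeff: assumes j: "j < n"
  shows "peval ({..<n}-{j}) (n-1) (subst_zero j (pdiff j p)) (y::nat\<Rightarrow>real) = coeff (Pg {..<n} n p j y) 1"
proof -
  define V where "V = {..<n}-{j}"
  have "coeff (Pg {..<n} n p j y) 1 = (\<Sum>\<alpha>\<in>{\<alpha>\<in>monoms {..<n} n. \<alpha> j = 1}. p \<alpha> * (\<Prod>i\<in>V. y i ^ \<alpha> i))"
    using coeff_Pg[of "{..<n}" n p j y 1] by (simp add: sum.inter_filter finite_monoms V_def cong: if_cong)
  moreover have "peval V (n-1) (subst_zero j (pdiff j p)) y = (\<Sum>\<alpha>\<in>{\<alpha>\<in>monoms {..<n} n. \<alpha> j = 1}. p \<alpha> * (\<Prod>i\<in>V. y i ^ \<alpha> i))"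
    unfolding peval_def
  proof (rule sum.reindex_bij_witness[where i = "\<lambda>\<alpha>. \<alpha>(j:=0)" and j = "\<lambda>\<beta>. \<beta>(j:=1)"])
    fix \<beta> assume b: "\<beta> \<in> monoms V (n-1)"
    have bj: "\<beta> j = 0" using b by (auto simp: monoms_def V_def)
    then show "\<beta>(j := 1, j := 0) = \<beta>" by auto
    have "j \<in> {..<n}" using j by simp
    from sum_upd0[OF _ this, where f=\<beta> and v=1] bj b j
    show "\<beta>(j := 1) \<in> {\<alpha> \<in> monoms {..<n} n. \<alpha> j = 1}"
      by (auto simp: monoms_def V_def sum.remove[of "{..<n}" j])
    have "(\<Prod>i\<in>V. y i ^ (\<beta>(j := 1)) i) = (\<Prod>i\<in>V. y i ^ \<beta> i)"
      by (rule prod.cong) (auto simp: V_def)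
    then show "p (\<beta>(j := 1)) * (\<Prod>i\<in>V. y i ^ (\<beta>(j := 1)) i) = of_real (subst_zero j (pdiff j p) \<beta>) * (\<Prod>i\<in>V. y i ^ \<beta> i)"
      using bj by (simp add: subst_zero_def pdiff_def)
  next
    fix \<alpha> assume a: "\<alpha> \<in> {\<alpha> \<in> monoms {..<n} n. \<alpha> j = 1}"
    then show "\<alpha>(j := 0, j := 1) = \<alpha>" by auto
    have "j \<in> {..<n}" using j by simp
    from sum_upd0[OF _ this, where f=\<alpha> and v=0] a j
    show "\<alpha>(j := 0) \<in> monoms V (n - 1)"
      by (auto simp: monoms_def V_def sum.remove[of "{..<n}" j])
  qed
  ultimately show ?thesis by (simp add: V_def)
qed

lemma final_arith:
  fixes a b L :: real and r :: nat
  assumes r: "r \<ge> 2" and a: "a > 0" and b: "b \<ge> 0" and L: "L > 0"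
    and H: "\<forall>s>0. s*L \<le> a*(1 + s*b/(a*r))^r"
  shows "((real r - 1)/r)^(r-1) * L \<le> b"
proof -
  have bpos: "b > 0"
  proof (rule ccontr)
    assume "\<not> b > 0" then have "b = 0" using b by simp
    then have "(2*a/L)*L \<le> a" using H a L by (metis divide_pos_pos mult_2 add_pos_pos mult_zero_right mult_zero_left add_0_right div_0 power_one mult_1_right)
    then show False using a L by simp
  qed
  define R where "R = real r"
  have R: "R \<ge> 2" using r by (simp add: R_def)
  define \<rho> where "\<rho> = R/(R-1)"
  have rho: "\<rho> > 0" using R by (simp add: \<rho>_def)
  define s where "s = a*\<rho>/b"
  have s: "s > 0" using a rho bpos by (simp add: s_def)
  have "1 + s*b/(a*R) = \<rho>" using a bpos R by (simp add: s_def \<rho>_def field_simps)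
  moreover have "s*L \<le> a*(1 + s*b/(a*R))^r" using H s by (simp add: R_def)
  ultimately have "s*L \<le> a*\<rho>^r" by simp
  also have "\<rho>^r = \<rho> * \<rho>^(r-1)" using r by (metis Suc_diff_1 le_trans one_le_numeral not_one_le_zero linorder_not_less power_Suc)
  finally have "(a*\<rho>/b)*L \<le> a*\<rho>*\<rho>^(r-1)" by (simp add: s_def mult_ac)
  then have "(a*\<rho>)*(L/b) \<le> (a*\<rho>)*\<rho>^(r-1)" by (simp add: mult_ac)
  then have "L/b \<le> \<rho>^(r-1)" using a rho by (metis mult_le_cancel_left_pos mult_pos_pos)
  then have "L \<le> b*\<rho>^(r-1)" using bpos by (simp add: divide_le_eq mult_ac)
  then have "((R-1)/R)^(r-1) * L \<le> ((R-1)/R)^(r-1) * (b*\<rho>^(r-1))"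
    using R by (intro mult_left_mono) auto
  also have "((R-1)/R)^(r-1) * (b*\<rho>^(r-1)) = b * ((R-1)/R * \<rho>)^(r-1)"
    by (simp add: power_mult_distrib[symmetric] mult_ac)
  also have "(R-1)/R * \<rho> = 1" using R by (simp add: \<rho>_def)
  finally show ?thesis by (simp add: R_def)
qed

lemma amgm2:
  fixes x y :: real and k :: nat
  assumes "x \<ge> 0" "y \<ge> 0"
  shows "(1+x)*(1+y)^k \<le> (1 + (x + k*y)/(k+1))^(k+1)"
proof -
  define A where "A = 1+x"
  define B where "B = 1+y"
  have A: "A > 0" and B: "B > 0" using assms by (auto simp: A_def B_def)
  have "(1/(k+1)) * ln A + (k/(k+1)) * ln B \<le> ln ((1/(k+1)) * A + (k/(k+1)) * B)"
  proof -
    have c: "\<forall>x::real\<in>{0<..}. \<forall>y\<in>{0<..}. \<forall>u::real\<ge>0. \<forall>v::real\<ge>0. u + v = 1 \<longrightarrow> u * ln x + v * ln y \<le> ln (u * x + v * y)"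
      using ln_concave unfolding concave_on_iff by simp
    have "(1/(k+1)) + (k/(k+1)) = (1::real)" by (simp add: field_simps)
    then show ?thesis using c A B by (metis greaterThan_iff of_nat_0_le_iff zero_le_divide_iff zero_le_one add_nonneg_nonneg)
  qed
  also have "(1/(k+1)) * A + (k/(k+1)) * B = 1 + (x + k*y)/(k+1)"
    by (simp add: A_def B_def divide_simps) (simp add: algebra_simps)
  finally have "(1/(k+1)) * ln A + (k/(k+1)) * ln B \<le> ln (1 + (x + k*y)/(k+1))" .
  then have m: "(real k+1) * ((1/(k+1)) * ln A + (k/(k+1)) * ln B) \<le> (real k+1) * ln (1 + (x + k*y)/(k+1))"
    by (rule mult_left_mono) auto
  moreover have e: "(real k+1) * ((1/(k+1)) * ln A + (k/(k+1)) * ln B) = ln A + k * ln B"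
    by (simp add: distrib_left add.commute[of "real k" 1])
  ultimately have "ln A + k * ln B \<le> (real k+1) * ln (1 + (x + k*y)/(k+1))"
    by (metis e m)
  moreover have "ln (A * B^k) = ln A + k * ln B" using A B by (simp add: ln_mult ln_realpow)
  moreover have "ln ((1 + (x + k*y)/(k+1))^(k+1)) = (k+1) * ln (1 + (x + k*y)/(k+1))"
    using assms by (subst ln_realpow) (auto intro: add_pos_nonneg)
  ultimately have "ln (A * B^k) \<le> ln ((1 + (x + k*y)/(k+1))^(k+1))" by (simp add: add.commute)
  moreover have "0 < (1 + (x + k*y)/(k+1))"  using assms by (auto intro: add_pos_nonneg)
  then have "0 < (1 + (x + k*y)/(k+1))^(k+1)" by (rule zero_less_power)
  ultimately show ?thesis using A B by (simp add: A_def B_def)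
qed

lemma mp_add: "map_poly complex_of_real (p+q) = map_poly of_real p + map_poly of_real q"
  by (rule poly_eqI) (simp add: coeff_map_poly)
lemma mp_smult: "map_poly complex_of_real (smult a q) = smult (of_real a) (map_poly of_real q)"
  by (rule poly_eqI) (simp add: coeff_map_poly)
lemma mpm: "poly (map_poly complex_of_real (p*q)) z = poly (map_poly of_real p) z * poly (map_poly of_real q) z"
proof (induction p)
  case 0 then show ?case by simp
next
  case (pCons a p)
  have "pCons a p * q = smult a q + pCons 0 (p * q)" by simp
  then show ?case using pCons by (simp add: mp_add mp_smult map_poly_pCons algebra_simps)
qed
lemma mp_real: "poly (map_poly complex_of_real p) (of_real x) = of_real (poly p x)"
  by (induction p) (auto simp: map_poly_pCons)

lemma gurv:
  fixes P :: "real poly"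
  assumes "\<forall>z. poly (map_poly complex_of_real P) z = 0 \<longrightarrow> (\<exists>c>0. z = of_real (-c))"
    and "coeff P 0 > 0"
  shows "coeff P 1 \<ge> 0 \<and> (\<forall>m s. degree P \<le> m \<longrightarrow> s \<ge> 0 \<longrightarrow>
           poly P s \<le> coeff P 0 * (1 + s * coeff P 1 / (coeff P 0 * m))^m)"
  using assms
proof (induction "degree P" arbitrary: P)
  case 0
  then obtain a where P: "P = [:a:]" by (metis degree_eq_zeroE)
  then show ?case by simp
next
  case (Suc d P)
  have "degree (map_poly complex_of_real P) = Suc d"
    using Suc(2) by (subst degree_map_poly) auto
  then have "\<not> constant (poly (map_poly complex_of_real P))" by (simp add: constant_degree)
  then obtain z where z: "poly (map_poly complex_of_real P) z = 0"
    using fundamental_theorem_of_algebra by blast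
  then obtain c where c: "c > 0" "z = of_real (-c)" using Suc(3) by blast
  have "poly P (-c) = 0" using z c mp_real[of P "-c"] by simp
  then have "[:c, 1:] dvd P" using poly_eq_0_iff_dvd[of P "-c"] by simp
  then obtain P1 where P: "P = [:c,1:] * P1" by (elim dvdE)
  have P1nz: "P1 \<noteq> 0" using P Suc(2) by auto
  have "degree ([:c,1:]*P1) = degree [:c,1:] + degree P1"
    by (rule degree_mult_eq) (use P1nz in auto)
  then have dP1: "degree P1 = d" using P Suc(2) by simp
  have roots1: "\<forall>z. poly (map_poly complex_of_real P1) z = 0 \<longrightarrow> (\<exists>c>0. z = of_real (-c))"
    using Suc(3) P mpm by (metis mult_zero_right)
  have c0: "coeff P 0 = c * coeff P1 0" using P by simp
  have c1: "coeff P 1 = coeff P1 0 + c * coeff P1 1" using P by simp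
  have a1: "coeff P1 0 > 0" using c0 Suc(4) c(1) by (simp add: zero_less_mult_iff)
  from Suc(1)[OF dP1[symmetric] roots1 a1]
  have b1: "coeff P1 1 \<ge> 0" and
    IH: "\<And>m s. d \<le> m \<Longrightarrow> s \<ge> 0 \<Longrightarrow> poly P1 s \<le> coeff P1 0 * (1 + s * coeff P1 1 / (coeff P1 0 * m))^m"
    using dP1 by auto
  define a where "a = coeff P1 0"
  define b where "b = coeff P1 1"
  have bpos: "coeff P 1 \<ge> 0" using c1 a1 b1 c by simp
  show ?case
  proof (intro conjI bpos allI impI)
    fix m and s :: real
    assume m: "degree P \<le> m" and s: "0 \<le> s"
    obtain k where k: "m = Suc k" using m Suc(2) by (cases m) auto
    have dk: "d \<le> k" using m k Suc(2) by simp
    define y where "y = s * b / (a * k)"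
    have y: "y \<ge> 0" using s b1 a1 by (simp add: y_def b_def a_def)
    have ky: "k * y = s * b / a"
    proof (cases "k = 0")
      case True
      then have "degree P1 = 0" using dk dP1 by simp
      then have "b = 0" by (simp add: b_def coeff_eq_0)
      then show ?thesis using True by (simp add: y_def)
    next
      case False then show ?thesis by (simp add: y_def)
    qed
    have "poly P s = (c + s) * poly P1 s" using P by (simp add: algebra_simps)
    also have "\<dots> \<le> (c + s) * (a * (1 + y)^k)"
      using IH[OF dk s] c s by (intro mult_left_mono) (auto simp: y_def a_def b_def)
    also have "\<dots> = (c * a) * ((1 + s/c) * (1+y)^k)" using c by (simp add: field_simps)
    also have "\<dots> \<le> (c * a) * (1 + (s/c + k*y)/(k+1))^(k+1)"
      using amgm2[of "s/c" y k] s c y a1 by (intro mult_left_mono) (auto simp: a_def)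
    also have "(s/c + k*y) = s/c + s*b/a" by (simp only: ky)
    also have "\<dots> = s * (a + c*b) / (c*a)"
      using c a1 by (simp add: a_def field_simps)
    also have "\<dots> = s * coeff P 1 / coeff P 0" by (simp only: c0 c1 a_def b_def)
    also have "(c * a) * (1 + s * coeff P 1 / coeff P 0 / (k+1))^(k+1)
       = coeff P 0 * (1 + s * coeff P 1 / (coeff P 0 * m))^m"
      by (simp add: c0 a_def k mult.commute)
    finally show "poly P s \<le> coeff P 0 * (1 + s * coeff P 1 / (coeff P 0 * m))^m" .
  qed
qed



theorem proposition7p3:
  fixes n r :: nat and p :: "(nat \<Rightarrow> nat) \<Rightarrow> real"
  assumes "r \<ge> 1"
    and "hom_plus {..<n} n p"
    and "H_stable n p"
    and "\<forall>t::real. \<forall>i<n. peval {..<n} n p (\<lambda>k. if k = i then 1 + t else 1)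
            = ((real r + t) / real r) ^ r"
  shows "\<forall>j<n. doubly_stochastic ({..<n} - {j})
                 (\<lambda>\<alpha>. subst_zero j (pdiff j p) \<alpha> / G (real r))"
proof (intro allI impI)
  fix j assume j: "j < n"
  note r = assms(1) and hp = assms(2) and stab = assms(3) and regA = assms(4)
  define N where "N = {..<n}"
  define M where "M = monoms N n"
  define V where "V = N - {j}"
  define q where "q = subst_zero j (pdiff j p)"
  define Gr where "Gr = G (real r)"
  have fN: "finite N" by (simp add: N_def)
  have fM: "finite M" by (simp add: M_def finite_monoms fN)
  have jN: "j \<in> N" using j by (simp add: N_def)
  have pnn: "\<And>\<alpha>. 0 \<le> p \<alpha>" and psupp: "\<And>\<alpha>. \<alpha> \<notin> M \<Longrightarrow> p \<alpha> = 0"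
    using hp by (auto simp: hom_plus_def M_def N_def)
  have reg: "peval N n p ((\<lambda>_. 1)(i:=s)) = ((real r - 1 + s)/r)^r" if "i < n" for i s
  proof -
    have e: "(\<lambda>k. if k = i then 1 + (s-1) else 1) = (\<lambda>_. 1::real)(i:=s)" by auto
    have "peval {..<n} n p (\<lambda>k. if k = i then 1 + (s-1) else 1) = ((real r + (s-1))/r)^r"
      using regA that by blast
    moreover have "real r + (s-1) = real r - 1 + s" by simp
    ultimately show ?thesis unfolding N_def e by simp
  qed
  define E where "E = [:(real r - 1)/r, 1/r:]^r"
  have polyE: "poly E s = ((real r - 1 + s)/r)^r" for s
    by (simp add: E_def poly_power add_divide_distrib)
  have PgE: "Pg N n p i (\<lambda>_. 1) = E" if "i < n" for i
  proof -
    have "poly (Pg N n p i (\<lambda>_. 1)) = poly E"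
    proof
      fix s
      have "i \<in> N" using that by (simp add: N_def)
      then show "poly (Pg N n p i (\<lambda>_. 1)) s = poly E s"
        using poly_Pg[OF fN, of i n p "\<lambda>_. 1" s] reg[OF that, of s] polyE[of s] by simp
    qed
    then show ?thesis by (simp add: poly_eq_poly_eq_iff)
  qed
  have coeffE: "coeff E m = (\<Sum>\<alpha>\<in>M. if \<alpha> i = m then p \<alpha> else 0)" if "i < n" for i m
    using coeff_Pg[of N n p i "\<lambda>_. 1::real" m] PgE[OF that] by (simp add: M_def cong: if_cong)
  have degE: "degree E \<le> r"
    using degree_power_le[of "[:(real r - 1)/r, 1/r:]" r] r by (simp add: E_def)
  have pzero: "p \<alpha> = 0" if "\<alpha> \<in> M" "coeff E (\<alpha> i) = 0" "i < n" for \<alpha> i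
  proof -
    have "(\<Sum>\<beta>\<in>M. if \<beta> i = \<alpha> i then p \<beta> else 0) = 0" using that coeffE by simp
    then have "\<forall>\<beta>\<in>M. (if \<beta> i = \<alpha> i then p \<beta> else 0) = 0"
      by (subst sum_nonneg_eq_0_iff[symmetric]) (auto simp: fM pnn)
    then show ?thesis using that by auto
  qed
  have Gpow: "Gr = ((real r - 1)/r)^(r-1)"
  proof (cases "r = 1")
    case True then show ?thesis by (simp add: Gr_def G_def)
  next
    case False
    have b: "(real r - 1)/r > 0" using r False by auto
    have "G (real r) = ((real r - 1)/r) powr (real (r-1))" using False r by (simp add: G_def of_nat_diff)
    also have "((real r - 1)/r) powr (real (r-1)) = ((real r -1)/r)^(r-1)" by (rule powr_realpow[OF b])
    finally show ?thesis by (simp add: Gr_def)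
  qed
  have Gpos: "Gr > 0"
  proof (cases "r = 1")
    case True then show ?thesis by (simp add: Gr_def G_def)
  next
    case False then have "(real r - 1)/r > 0" using r by auto
    then show ?thesis by (simp add: Gpow)
  qed
  have coeffE1: "coeff E 1 = Gr"
  proof -
    have "coeff E 1 = coeff (pderiv E) 0" by (simp add: coeff_pderiv)
    also have "\<dots> = poly (pderiv E) 0" by (simp add: poly_0_coeff_0)
    also have "\<dots> = real r * ((real r - 1)/r)^(r-1) * (1/r)"
      by (simp add: E_def pderiv_power pderiv_pCons)
    also have "\<dots> = Gr" using r by (simp add: Gpow)
    finally show ?thesis .
  qed
  have sum1: "(\<Sum>\<alpha>\<in>M. p \<alpha>) = 1"
  proof -
    have "peval N n p ((\<lambda>_. 1::real)(j:=1)) = 1" using reg[OF j, of 1] r by simp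
    then show ?thesis by (simp add: peval_def M_def)
  qed
  have sum2: "(\<Sum>\<alpha>\<in>M. p \<alpha> * \<alpha> i) = 1" if i: "i < n" for i
  proof -
    have iN: "i \<in> N" using i by (simp add: N_def)
    have eq: "(\<lambda>s. \<Sum>\<alpha>\<in>M. p \<alpha> * s ^ \<alpha> i) = poly E"
    proof
      fix s :: real
      have "(\<Prod>l\<in>N. ((\<lambda>_. 1)(i:=s)) l ^ \<alpha> l) = s ^ \<alpha> i" for \<alpha>
        using iN fN by (simp add: prod.remove[of N i])
      then have "peval N n p ((\<lambda>_. 1)(i:=s)) = (\<Sum>\<alpha>\<in>M. p \<alpha> * s ^ \<alpha> i)"
        by (simp add: peval_def M_def)
      then show "(\<Sum>\<alpha>\<in>M. p \<alpha> * s ^ \<alpha> i) = poly E s" using reg[OF i] polyE by simp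
    qed
    have d1: "((\<lambda>s. \<Sum>\<alpha>\<in>M. p \<alpha> * s ^ \<alpha> i) has_real_derivative (\<Sum>\<alpha>\<in>M. p \<alpha> * (real (\<alpha> i) * 1 ^ (\<alpha> i - 1)))) (at 1)"
      by (intro derivative_eq_intros) auto
    have d2: "(poly E has_real_derivative poly (pderiv E) 1) (at 1)" by (rule poly_DERIV)
    have "poly (pderiv E) 1 = 1"
      using r by (simp add: E_def pderiv_power pderiv_pCons add_divide_distrib[symmetric])
    then show ?thesis using DERIV_unique[OF d1[unfolded eq] d2] by simp
  qed
  have capI: "peval N n p x \<ge> (\<Prod>i\<in>N. x i)" if "\<forall>i<n. x i > 0" for x :: "nat \<Rightarrow> real"
  proof -
    have s1': "(\<Sum>\<alpha>\<in>monoms {..<n} n. p \<alpha>) = 1" using sum1 by (simp add: M_def N_def)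
    have s2': "\<forall>i<n. (\<Sum>\<alpha>\<in>monoms {..<n} n. p \<alpha> * \<alpha> i) = 1" using sum2 by (simp add: M_def N_def)
    show ?thesis using cap[OF hp s1' s2' that] by (simp add: N_def)
  qed
  have main: "coeff (Pg N n p j y) 1 \<ge> Gr * (\<Prod>i\<in>V. y i)" if ypos: "\<forall>i\<in>V. y i > 0" for y

  proof -
    define P where "P = Pg N n p j y"
    define L where "L = (\<Prod>i\<in>V. y i)"
    have Lpos: "L > 0" using ypos by (simp add: L_def prod_pos)
    have lower: "s * L \<le> poly P s" if s: "s > 0" for s
    proof -
      have "poly P s = peval N n p (y(j:=s))" by (simp add: P_def poly_Pg fN jN)
      moreover have "(\<Prod>i\<in>N. (y(j:=s)) i) = s * L"
      proof -
        have "(\<Prod>i\<in>N. (y(j:=s)) i) = s * (\<Prod>i\<in>N-{j}. (y(j:=s)) i)"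
          using fN jN by (simp add: prod.remove[of N j])
        also have "(\<Prod>i\<in>N-{j}. (y(j:=s)) i) = L" unfolding L_def V_def by (rule prod.cong) auto
        finally show ?thesis .
      qed
      moreover have "\<forall>i<n. (y(j:=s)) i > 0" using ypos s by (auto simp: V_def N_def)
      ultimately show ?thesis using capI by metis
    qed
    have coeffP: "coeff P m = (\<Sum>\<alpha>\<in>M. if \<alpha> j = m then p \<alpha> * (\<Prod>i\<in>V. y i ^ \<alpha> i) else 0)" for m
      by (simp add: P_def coeff_Pg M_def V_def cong: if_cong)
    have deg: "degree P \<le> r"
    proof (rule degree_le, intro allI impI)
      fix m assume m: "r < m"
      have "coeff E m = 0" using degE m by (simp add: coeff_eq_0)
      then have "\<forall>\<alpha>\<in>M. \<alpha> j = m \<longrightarrow> p \<alpha> = 0" using pzero[of _ j] j by auto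
      then show "coeff P m = 0" unfolding coeffP by (intro sum.neutral) auto
    qed
    show ?thesis
    proof (cases "r = 1")
      case True
      have E1: "E = [:0, 1:]" using True by (simp add: E_def)
      have "\<forall>\<alpha>\<in>M. \<alpha> j = 0 \<longrightarrow> p \<alpha> = 0" using pzero[of _ j] j E1 by auto
      then have c0: "coeff P 0 = 0" unfolding coeffP by (intro sum.neutral) auto
      have "poly P 1 = (\<Sum>i\<le>degree P. coeff P i)" by (simp add: poly_altdef)
      also have "\<dots> = (\<Sum>i\<le>1. coeff P i)"
        by (rule sum.mono_neutral_left) (use deg True in \<open>auto simp: coeff_eq_0\<close>)
      also have "\<dots> = coeff P 1" using c0 by simp
      finally have "coeff P 1 \<ge> 1 * L" using lower[of 1] by simp
      then show ?thesis using True by (simp add: Gr_def G_def L_def P_def)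
    next
      case False
      then have r2: "r \<ge> 2" using r by simp
      have "coeff E 0 = ((real r - 1)/r)^r" using polyE[of 0] by (simp add: poly_0_coeff_0)
      moreover have "(real r - 1)/r > 0" using r2 by simp
      ultimately have "coeff E 0 > 0" by simp
      then have "(\<Sum>\<alpha>\<in>M. if \<alpha> j = 0 then p \<alpha> else 0) \<noteq> 0" using coeffE[OF j] by simp
      then obtain \<alpha> where al: "\<alpha> \<in> M" "(if \<alpha> j = 0 then p \<alpha> else 0) \<noteq> 0"
        using sum.neutral[of M "\<lambda>\<alpha>. if \<alpha> j = 0 then p \<alpha> else 0"] by blast
      then have al2: "\<alpha> j = 0" "p \<alpha> > 0" using pnn[of \<alpha>] by (auto split: if_splits)
      have apos: "coeff P 0 > 0"
      proof -
        have "0 < p \<alpha> * (\<Prod>i\<in>V. y i ^ \<alpha> i)" using al2 ypos by (simp add: prod_pos)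
        also have "\<dots> = (if \<alpha> j = 0 then p \<alpha> * (\<Prod>i\<in>V. y i ^ \<alpha> i) else 0)" using al2 by simp
        also have "\<dots> \<le> (\<Sum>\<alpha>\<in>M. if \<alpha> j = 0 then p \<alpha> * (\<Prod>i\<in>V. y i ^ \<alpha> i) else 0)"
          by (rule member_le_sum) (use al fM ypos pnn in \<open>auto intro!: mult_nonneg_nonneg prod_nonneg\<close>)
        finally show ?thesis by (simp add: coeffP)
      qed
      have roots: "\<forall>z. poly (map_poly complex_of_real P) z = 0 \<longrightarrow> (\<exists>c>0. z = of_real (-c))"
      proof (intro allI impI)
        fix z assume z0: "poly (map_poly complex_of_real P) z = 0"
        have "peval {..<n} n p ((\<lambda>i. complex_of_real (y i))(j:=z)) = 0"
          using z0 poly_Pg[OF fN jN, of n p "\<lambda>i. complex_of_real (y i)" z] unfolding P_def map_Pg N_def by simp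
        then have zr: "z \<in> \<real> \<and> Re z \<le> 0" using stable_roots[OF stab j] ypos by (auto simp: V_def N_def)
        have "z \<noteq> 0" using mp_real[of P 0] apos z0 by (auto simp: poly_0_coeff_0)
        then have "Re z < 0" using zr by (metis complex_is_Real_iff complex_eq_iff zero_complex.simps order_le_less)
        moreover have "z = of_real (Re z)" using zr by (simp add: complex_is_Real_iff complex_eq_iff)
        ultimately show "\<exists>c>0. z = of_real (-c)" by (intro exI[of _ "- Re z"]) auto
      qed
      from gurv[OF roots apos] have b0: "coeff P 1 \<ge> 0"
        and bound: "\<And>s. s \<ge> 0 \<Longrightarrow> poly P s \<le> coeff P 0 * (1 + s * coeff P 1 / (coeff P 0 * r))^r"
        using deg by auto
      have "\<forall>s>0. s*L \<le> coeff P 0 * (1 + s*coeff P 1/(coeff P 0 * r))^r"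
        using bound lower by (meson less_imp_le order_trans)
      from final_arith[OF r2 apos b0 Lpos this] have "((real r - 1)/r)^(r-1) * L \<le> coeff P 1" .
      then show ?thesis using Gpow by (simp add: P_def L_def)
    qed
  qed

  have cardV: "card V = n - 1" using jN fN by (simp add: V_def N_def)
  have qval: "q \<alpha> = (if \<alpha> j = 0 then p (\<alpha>(j:=1)) else 0)" for \<alpha>
    by (simp add: q_def subst_zero_def pdiff_def)
  have Qc: "peval V (n-1) q y = coeff (Pg N n p j y) 1" for y :: "nat \<Rightarrow> real"
    using Q_coeff[OF j, of p y] by (simp add: V_def N_def q_def)
  have qnn: "q \<alpha> \<ge> 0" for \<alpha> using pnn by (simp add: qval)
  have qsupp: "q \<alpha> = 0" if "\<alpha> \<notin> monoms V (n-1)" for \<alpha>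
  proof (rule ccontr)
    assume "q \<alpha> \<noteq> 0"
    then have a0: "\<alpha> j = 0" and pa: "p (\<alpha>(j:=1)) \<noteq> 0" by (auto simp: qval split: if_splits)
    then have aM: "\<alpha>(j:=1) \<in> M" using psupp by blast
    have eq: "(\<alpha>(j:=1))(j:=0) = \<alpha>" using a0 by auto
    have su: "sum ((\<alpha>(j:=1))(j:=0)) N = sum (\<alpha>(j:=1)) N - (\<alpha>(j:=1)) j + 0"
      using sum_upd0[OF fN jN, where f="\<alpha>(j:=1)" and v=0] by blast
    then have "sum \<alpha> N = sum (\<alpha>(j:=1)) N - 1" unfolding eq by simp
    moreover have "sum (\<alpha>(j:=1)) N = n" using aM by (simp add: M_def monoms_def)
    ultimately have "sum \<alpha> N = n - 1" by simp
    moreover have "sum \<alpha> V = sum \<alpha> N" using a0 fN jN by (simp add: V_def sum.remove[of N j])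
    moreover have "\<forall>i. i \<notin> V \<longrightarrow> \<alpha> i = 0"
    proof (intro allI impI)
      fix i assume "i \<notin> V"
      then have "i = j \<or> i \<notin> N" by (auto simp: V_def)
      then show "\<alpha> i = 0" using a0 aM j by (auto simp: M_def monoms_def N_def)
    qed
    ultimately have "\<alpha> \<in> monoms V (n-1)" by (simp add: monoms_def)
    then show False using that by simp
  qed
  have fV: "finite V" using fN by (simp add: V_def)
  show "doubly_stochastic ({..<n} - {j}) (\<lambda>\<alpha>. subst_zero j (pdiff j p) \<alpha> / G (real r))"
    unfolding doubly_stochastic_def
  proof (intro conjI ballI)
    show "hom_plus ({..<n} - {j}) (card ({..<n} - {j})) (\<lambda>\<alpha>. subst_zero j (pdiff j p) \<alpha> / G (real r))"
      using qnn qsupp Gpos cardV unfolding hom_plus_def by (simp add: q_def Gr_def V_def N_def)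
  next
    fix k assume kV0: "k \<in> {..<n} - {j}"
    then have kV: "k \<in> V" by (simp add: V_def N_def)
    have n2: "n - 1 \<ge> 1" using kV j by (auto simp: V_def N_def)
    define f where "f u = (\<Sum>\<beta>\<in>monoms V (n-1). q \<beta> * (1+u)^(\<beta> k)) - Gr * (1+u)" for u :: real
    have hsum: "peval V (n-1) q ((\<lambda>_. 1)(k:=1+u)) = (\<Sum>\<beta>\<in>monoms V (n-1). q \<beta> * (1+u)^(\<beta> k))" for u :: real
    proof -
      have "(\<Prod>i\<in>V. ((\<lambda>_. 1)(k:=1+u)) i ^ \<beta> i) = (1+u)^(\<beta> k)" for \<beta>
      proof -
        have "(\<Prod>i\<in>V. ((\<lambda>_. 1)(k:=1+u)) i ^ \<beta> i) = (1+u)^(\<beta> k) * (\<Prod>i\<in>V-{k}. ((\<lambda>_. 1)(k:=1+u)) i ^ \<beta> i)"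
          using fV kV by (simp add: prod.remove[of V k])
        also have "(\<Prod>i\<in>V-{k}. ((\<lambda>_. 1)(k:=1+u)) i ^ \<beta> i) = 1" by (rule prod.neutral) auto
        finally show ?thesis by simp
      qed
      then show ?thesis by (simp add: peval_def)
    qed
    have fnn: "f u \<ge> 0" if "\<bar>u\<bar> < 1" for u
    proof -
      have "\<forall>i\<in>V. ((\<lambda>_. 1)(k:=1+u)) i > (0::real)" using that by auto
      from main[OF this] have "coeff (Pg N n p j ((\<lambda>_. 1)(k:=1+u))) 1 \<ge> Gr * (\<Prod>i\<in>V. ((\<lambda>_. 1)(k:=1+u)) i)" .
      moreover have "(\<Prod>i\<in>V. ((\<lambda>_. 1::real)(k:=1+u)) i) = 1+u"
      proof -
        have "(\<Prod>i\<in>V. ((\<lambda>_. 1::real)(k:=1+u)) i) = (1+u) * (\<Prod>i\<in>V-{k}. ((\<lambda>_. 1)(k:=1+u)) i)"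
          using fV kV by (simp add: prod.remove[of V k])
        also have "(\<Prod>i\<in>V-{k}. ((\<lambda>_. 1::real)(k:=1+u)) i) = 1" by (rule prod.neutral) auto
        finally show ?thesis by simp
      qed
      ultimately show ?thesis using Qc[of "(\<lambda>_. 1)(k:=1+u)"] hsum[of u] by (simp add: f_def)
    qed
    have f0: "f 0 = 0"
    proof -
      have "(\<lambda>_. 1::real)(k:=1+0) = (\<lambda>_. 1)" by auto
      then have "peval V (n-1) q (\<lambda>_. 1::real) = (\<Sum>\<beta>\<in>monoms V (n-1). q \<beta> * (1+0)^(\<beta> k))"
        using hsum[of 0] by simp
      moreover have "peval V (n-1) q (\<lambda>_. 1::real) = Gr" using Qc PgE[OF j] coeffE1 by simp
      ultimately show ?thesis by (simp add: f_def)
    qed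
    have df: "(f has_real_derivative ((\<Sum>\<beta>\<in>monoms V (n-1). q \<beta> * (real (\<beta> k) * (1+0)^(\<beta> k - 1))) - Gr * 1)) (at 0)"
      unfolding f_def[abs_def] by (intro derivative_eq_intros) auto
    have "(\<Sum>\<beta>\<in>monoms V (n-1). q \<beta> * (real (\<beta> k) * (1+0)^(\<beta> k - 1))) - Gr * 1 = 0"
      by (rule DERIV_local_min[OF df, of 1]) (use fnn f0 in auto)
    then have sq: "(\<Sum>\<beta>\<in>monoms V (n-1). q \<beta> * \<beta> k) = Gr" by simp
    have "peval V (n-1-1) (pdiff k (\<lambda>\<alpha>. q \<alpha> / Gr)) (\<lambda>_. 1::real) = (\<Sum>\<beta>\<in>monoms V (n-1). q \<beta> / Gr * \<beta> k)"
      by (rule pdiff_ones[OF fV kV n2])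
    also have "\<dots> = (\<Sum>\<beta>\<in>monoms V (n-1). q \<beta> * \<beta> k) / Gr" by (simp add: sum_divide_distrib)
    also have "\<dots> = 1" using sq Gpos by simp
    finally show "peval ({..<n} - {j}) (card ({..<n} - {j}) - 1) (pdiff k (\<lambda>\<alpha>. subst_zero j (pdiff j p) \<alpha> / G (real r))) (\<lambda>_. 1::real) = 1"
      using cardV by (simp add: V_def N_def q_def Gr_def)
  qed
qed

end
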